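(* Let $((h_n,\psi_n))\subset X_{2l}^{\rm conv}$ be a sequence such that $h_n$ converges to some $h\in\mathcal H_{2l}$ uniformly on compact subsets of $(0,2l)$ and $\psi_n$ converges to some $\psi\in BV(R_{2l})$ in $L^1(R_{2l})$. Then $(h,\psi)\in X_{2l}^{\rm conv}$.
   Context: Let $l>0$, $R_{2l}=(0,2l)\times(-1,1)$ with coordinates $(w_1,w_2)$. $\mathcal H_{2l}=\{h:[0,2l]\to[-1,1]\text{ convex},\ h(w_1)=h(2l-w_1)\ \forall w_1\}$. For $h\in\mathcal H_{2l}$, $SG_h=\{(w_1,w_2)\in R_{2l}:w_2<h(w_1)\}$. $X_{2l}^{\rm conv}=\{(h,\psi):h\in\mathcal H_{2l},\ \psi\in BV(R_{2l},[0,1]),\ \psi=0\text{ a.e. on }R_{2l}\setminus SG_h\}$. *)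

theory Defs
  imports "HOL-Analysis.Analysis"
begin

definition Rect :: "real \<Rightarrow> (real \<times> real) set" where
  "Rect l = {0<..<2*l} \<times> {-1<..<1}"

definition Hconv :: "real \<Rightarrow> (real \<Rightarrow> real) set" where
  "Hconv l = {h. convex_on {0..2*l} h \<and> h ` {0..2*l} \<subseteq> {-1..1}
                 \<and> (\<forall>w\<in>{0..2*l}. h w = h (2*l - w))}"

definition SG :: "real \<Rightarrow> (real \<Rightarrow> real) \<Rightarrow> (real \<times> real) set" where
  "SG l h = {w \<in> Rect l. snd w < h (fst w)}"

definition C1c :: "(real \<times> real) set \<Rightarrow> ((real \<times> real) \<Rightarrow> real) \<Rightarrow> bool" where
  "C1c U f \<longleftrightarrow>
     (\<forall>x. f differentiable (at x)) \<and>
     continuous_on UNIV (\<lambda>x. frechet_derivative f (at x) (1,0)) \<and>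
     continuous_on UNIV (\<lambda>x. frechet_derivative f (at x) (0,1)) \<and>
     (\<exists>K. compact K \<and> K \<subseteq> U \<and> (\<forall>x. x \<notin> K \<longrightarrow> f x = 0))"

definition div2 :: "((real \<times> real) \<Rightarrow> real) \<Rightarrow> ((real \<times> real) \<Rightarrow> real) \<Rightarrow> (real \<times> real) \<Rightarrow> real" where
  "div2 f1 f2 x = frechet_derivative f1 (at x) (1,0) + frechet_derivative f2 (at x) (0,1)"

definition BV :: "(real \<times> real) set \<Rightarrow> ((real \<times> real) \<Rightarrow> real) \<Rightarrow> bool" where
  "BV U \<psi> \<longleftrightarrow> set_integrable lborel U \<psi> \<and>
     (\<exists>C. \<forall>f1 f2. C1c U f1 \<and> C1c U f2 \<and> (\<forall>x. (f1 x)\<^sup>2 + (f2 x)\<^sup>2 \<le> 1) \<longrightarrow>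
        (LINT x:U|lborel. \<psi> x * div2 f1 f2 x) \<le> C)"

definition BV01 :: "(real \<times> real) set \<Rightarrow> ((real \<times> real) \<Rightarrow> real) \<Rightarrow> bool" where
  "BV01 U \<psi> \<longleftrightarrow> BV U \<psi> \<and> (AE x in lborel. x \<in> U \<longrightarrow> \<psi> x \<in> {0..1})"

definition Xconv :: "real \<Rightarrow> (real \<Rightarrow> real) \<Rightarrow> ((real \<times> real) \<Rightarrow> real) \<Rightarrow> bool" where
  "Xconv l h \<psi> \<longleftrightarrow> h \<in> Hconv l \<and> BV01 (Rect l) \<psi> \<and>
     (AE x in lborel. x \<in> Rect l - SG l h \<longrightarrow> \<psi> x = 0)"

end

theory Submission
  imports Defs
begin
lemma graph_null:
  fixes h :: "real \<Rightarrow> real" and I :: "real set"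
  assumes "open I" "continuous_on I h"
  shows "AE z in (lborel::(real\<times>real) measure). fst z \<in> I \<longrightarrow> snd z \<noteq> h (fst z)"
proof -
  define g where "g x = (if x \<in> I then h x else 0)" for x
  have gm[measurable]: "g \<in> borel_measurable borel"
    unfolding g_def using assms
    by (intro borel_measurable_continuous_on_if) (auto intro: continuous_on_const)
  have Im[measurable]: "I \<in> sets borel" using assms by auto
  have eq: "(\<lambda>z::real\<times>real. fst z \<in> I \<longrightarrow> snd z \<noteq> h (fst z)) = (\<lambda>z. fst z \<in> I \<longrightarrow> snd z \<noteq> g (fst z))"
    by (auto simp: g_def fun_eq_iff)
  have "AE z in (lborel \<Otimes>\<^sub>M lborel :: (real\<times>real) measure). fst z \<in> I \<longrightarrow> snd z \<noteq> g (fst z)"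
  proof (rule lborel_pair.AE_pair_measure)
    show "{x \<in> space (lborel \<Otimes>\<^sub>M lborel). fst x \<in> I \<longrightarrow> snd x \<noteq> g (fst x)} \<in> sets (lborel \<Otimes>\<^sub>M lborel)"
      by measurable
    show "AE x in lborel. AE y in lborel. fst (x, y) \<in> I \<longrightarrow> snd (x, y) \<noteq> g (fst (x, y))"
    proof (rule AE_I2)
      fix x :: real
      show "AE y in lborel. fst (x, y) \<in> I \<longrightarrow> snd (x, y) \<noteq> g (fst (x, y))"
        using AE_lborel_singleton[of "g x"] by eventually_elim auto
    qed
  qed
  then show ?thesis unfolding eq lborel_prod .
qed

theorem lemma12p8:
  fixes l :: real and hs :: "nat \<Rightarrow> real \<Rightarrow> real" and h :: "real \<Rightarrow> real"
    and \<psi>s :: "nat \<Rightarrow> (real \<times> real) \<Rightarrow> real" and \<psi> :: "(real \<times> real) \<Rightarrow> real"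
  assumes "l > 0"
    and "\<forall>n. Xconv l (hs n) (\<psi>s n)"
    and "h \<in> Hconv l"
    and "\<forall>K. compact K \<and> K \<subseteq> {0<..<2*l} \<longrightarrow> uniform_limit K hs h sequentially"
    and "BV (Rect l) \<psi>"
    and "(\<lambda>n. LINT x:Rect l|lborel. \<bar>\<psi>s n x - \<psi> x\<bar>) \<longlonglongrightarrow> 0"
  shows "Xconv l h \<psi>"
proof -
  have Xi: "set_integrable lborel (Rect l) (\<psi>s n)" for n
    using assms(2) unfolding Xconv_def BV01_def BV_def by blast
  have Xa: "AE x in lborel. x \<in> Rect l \<longrightarrow> \<psi>s n x \<in> {0..1}" for n
    using assms(2) unfolding Xconv_def BV01_def by blast
  have Xb: "AE x in lborel. x \<in> Rect l - SG l (hs n) \<longrightarrow> \<psi>s n x = 0" for n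
    using assms(2) unfolding Xconv_def by blast
  have si: "set_integrable lborel (Rect l) \<psi>" using assms(5) unfolding BV_def by blast
  define u where "u n x = indicator (Rect l) x * (\<psi>s n x - \<psi> x)" for n x
  have ui: "integrable lborel (u n)" for n
  proof -
    have "set_integrable lborel (Rect l) (\<lambda>x. \<psi>s n x - \<psi> x)"
      by (rule set_integral_diff(1)[OF Xi si])
    then show ?thesis unfolding set_integrable_def u_def by simp
  qed
  have "(\<lambda>n. (\<integral>x. norm (u n x) \<partial>lborel)) = (\<lambda>n. LINT x:Rect l|lborel. \<bar>\<psi>s n x - \<psi> x\<bar>)"
    unfolding set_lebesgue_integral_def u_def
    by (intro ext Bochner_Integration.integral_cong) (auto simp: indicator_def)
  with assms(6) have "(\<lambda>n. (\<integral>x. norm (u n x) \<partial>lborel)) \<longlonglongrightarrow> 0" by simp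
  from tendsto_L1_AE_subseq[OF ui this] obtain r where r: "strict_mono r"
    and ae1: "AE x in lborel. (\<lambda>n. u (r n) x) \<longlonglongrightarrow> 0" by blast
  have ae2: "AE x in lborel. \<forall>n. x \<in> Rect l \<longrightarrow> \<psi>s n x \<in> {0..1}"
    using Xa by (subst AE_all_countable) simp
  have ae3: "AE x in lborel. \<forall>n. x \<in> Rect l - SG l (hs n) \<longrightarrow> \<psi>s n x = 0"
    using Xb by (subst AE_all_countable) simp
  have hc: "continuous_on {0<..<2*l} h"
  proof -
    have "convex_on {0..2*l} h" using assms(3) unfolding Hconv_def by blast
    then have "convex_on {0<..<2*l} h" by (rule convex_on_subset) auto
    then show ?thesis by (intro convex_on_continuous) auto
  qed
  have ae4: "AE z in lborel. fst z \<in> {0<..<2*l} \<longrightarrow> snd z \<noteq> h (fst z)"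
    by (rule graph_null[OF _ hc]) auto
  have lim: "(\<lambda>n. \<psi>s (r n) x) \<longlonglongrightarrow> \<psi> x" if "x \<in> Rect l" "(\<lambda>n. u (r n) x) \<longlonglongrightarrow> 0" for x
  proof -
    have "(\<lambda>n. u (r n) x + \<psi> x) \<longlonglongrightarrow> 0 + \<psi> x" by (intro tendsto_add that tendsto_const)
    then show ?thesis using that by (simp add: u_def)
  qed
  have A: "AE x in lborel. x \<in> Rect l \<longrightarrow> \<psi> x \<in> {0..1}"
    using ae1 ae2
  proof eventually_elim
    case (elim x)
    show ?case
    proof
      assume x: "x \<in> Rect l"
      note L = lim[OF x elim(1)]
      have "0 \<le> \<psi> x" using elim(2) x by (intro LIMSEQ_le_const[OF L]) auto
      moreover have "\<psi> x \<le> 1" using elim(2) x by (intro LIMSEQ_le_const2[OF L]) auto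
      ultimately show "\<psi> x \<in> {0..1}" by simp
    qed
  qed
  have B: "AE x in lborel. x \<in> Rect l - SG l h \<longrightarrow> \<psi> x = 0"
    using ae1 ae3 ae4
  proof eventually_elim
    case (elim x)
    show ?case
    proof
      assume x: "x \<in> Rect l - SG l h"
      then have xR: "x \<in> Rect l" by simp
      have f: "fst x \<in> {0<..<2*l}" using xR by (cases x) (auto simp: Rect_def)
      have gt: "snd x > h (fst x)" using x elim(3) f by (auto simp: SG_def)
      have "(\<lambda>n. hs n (fst x)) \<longlonglongrightarrow> h (fst x)"
        using tendsto_uniform_limitI[OF assms(4)[rule_format, of "{fst x}"]] f by auto
      then have "(\<lambda>n. hs (r n) (fst x)) \<longlonglongrightarrow> h (fst x)"
        using r by (rule LIMSEQ_subseq_LIMSEQ[unfolded comp_def])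
      then have "eventually (\<lambda>n. hs (r n) (fst x) < snd x) sequentially"
        using gt by (rule order_tendstoD)
      then have "eventually (\<lambda>n. \<psi>s (r n) x = 0) sequentially"
        by eventually_elim (use elim(2) xR in \<open>auto simp: SG_def\<close>)
      then have "(\<lambda>n. \<psi>s (r n) x) \<longlonglongrightarrow> 0"
        by (rule tendsto_eventually)
      with lim[OF xR elim(1)] show "\<psi> x = 0" using LIMSEQ_unique by blast
    qed
  qed
  show ?thesis unfolding Xconv_def BV01_def using assms(3,5) A B by blast
qed
end
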